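(* Let $k\ge1$ and let $\hat\theta_1,\dots,\hat\theta_k\in\mathbb R$ with $e^{i\hat\theta_1},\dots,e^{i\hat\theta_k}$ pairwise distinct. Let $\hat A=(\phi_k(e^{i\hat\theta_1}),\dots,\phi_k(e^{i\hat\theta_k}))\in\mathbb C^{(k+1)\times k}$, $V$ the column space of $\hat A$, $V^\perp$ its (one-dimensional) orthogonal complement in $\mathbb C^{k+1}$, $P_{V^\perp}$ the orthogonal projection onto $V^\perp$, and $v$ a unit vector in $V^\perp$. Then for every $\theta\in\mathbb R$, $$\min_{\hat a\in\mathbb C^k}\|\hat A\hat a-\phi_k(e^{i\theta})\|_2=\|P_{V^\perp}\phi_k(e^{i\theta})\|_2=|v^*\phi_k(e^{i\theta})|\ge\frac{1}{2^k}\prod_{j=1}^k|e^{i\theta}-e^{i\hat\theta_j}|.$$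
   Context: $\phi_s(z)=(1,z,\dots,z^s)^T\in\mathbb C^{s+1}$; $v^*$ is the conjugate transpose of $v$. *)

theory Defs
  imports Complex_Main
begin

text \<open>Vectors of C^(n+1) are represented as functions nat => complex, with only the
  coordinates 0..n relevant (and vectors of C^(n+1) being zero outside {0..n}).\<close>

definition cvecs :: "nat \<Rightarrow> (nat \<Rightarrow> complex) set" where
  "cvecs m = {u. \<forall>i\<ge>m. u i = 0}"

definition phi :: "nat \<Rightarrow> complex \<Rightarrow> nat \<Rightarrow> complex" where
  "phi s z = (\<lambda>i. if i \<le> s then z ^ i else 0)"

definition cinner :: "nat \<Rightarrow> (nat \<Rightarrow> complex) \<Rightarrow> (nat \<Rightarrow> complex) \<Rightarrow> complex" where
  "cinner m u w = (\<Sum>i<m. cnj (u i) * w i)"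

definition vnorm :: "nat \<Rightarrow> (nat \<Rightarrow> complex) \<Rightarrow> real" where
  "vnorm m u = sqrt (\<Sum>i<m. (cmod (u i))\<^sup>2)"

text \<open>The matrix Ahat = (phi_k(e^{i th_1}),...,phi_k(e^{i th_k})) applied to a in C^k
  (columns indexed 0..k-1).\<close>
definition Ahat_mult :: "nat \<Rightarrow> (nat \<Rightarrow> real) \<Rightarrow> (nat \<Rightarrow> complex) \<Rightarrow> nat \<Rightarrow> complex" where
  "Ahat_mult k th a = (\<lambda>i. \<Sum>j<k. phi k (exp (\<i> * complex_of_real (th j))) i * a j)"

definition colspace :: "nat \<Rightarrow> (nat \<Rightarrow> real) \<Rightarrow> (nat \<Rightarrow> complex) set" where
  "colspace k th = Ahat_mult k th ` cvecs k"

definition orth_compl :: "nat \<Rightarrow> (nat \<Rightarrow> complex) set \<Rightarrow> (nat \<Rightarrow> complex) set" where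
  "orth_compl m W = {w \<in> cvecs m. \<forall>u\<in>W. cinner m u w = 0}"

definition orth_proj :: "nat \<Rightarrow> (nat \<Rightarrow> complex) set \<Rightarrow> (nat \<Rightarrow> complex) \<Rightarrow> nat \<Rightarrow> complex" where
  "orth_proj m W x = (THE p. p \<in> W \<and> (\<forall>w\<in>W. cinner m w (\<lambda>i. x i - p i) = 0))"

end

theory Submission imports Defs "HOL-Analysis.Analysis" "HOL-Computational_Algebra.Polynomial"
begin

lemma cinner_cnj: "cinner m u w = cnj (cinner m w u)"
  unfolding cinner_def by (simp add: mult.commute)

lemma cinner_diff2: "cinner m u (\<lambda>i. a i - b i) = cinner m u a - cinner m u b"
  unfolding cinner_def by (simp add: algebra_simps sum_subtractf)

lemma cinner_scale2: "cinner m u (\<lambda>i. c * a i) = c * cinner m u a"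
  unfolding cinner_def by (simp add: algebra_simps sum_distrib_left)

lemma cinner_cong: "(\<And>i. i<m \<Longrightarrow> u i = u' i) \<Longrightarrow> (\<And>i. i<m \<Longrightarrow> w i = w' i) \<Longrightarrow> cinner m u w = cinner m u' w'"
  unfolding cinner_def by (rule sum.cong) auto

lemma vnorm_cong: "(\<And>i. i<m \<Longrightarrow> u i = u' i) \<Longrightarrow> vnorm m u = vnorm m u'"
  unfolding vnorm_def by (metis (no_types, lifting) lessThan_iff sum.cong)

lemma cinner_self: "cinner m u u = of_real (\<Sum>i<m. (cmod (u i))\<^sup>2)"
proof -
  have "\<And>i. cnj (u i) * u i = of_real ((cmod (u i))\<^sup>2)"
    using complex_norm_square by (simp add: mult.commute)
  then show ?thesis unfolding cinner_def of_real_sum by simp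
qed

lemma cinner_self_zero: "cinner m u u = 0 \<Longrightarrow> i<m \<Longrightarrow> u i = 0"
proof -
  assume "cinner m u u = 0" "i<m"
  then have "(\<Sum>i<m. (cmod (u i))\<^sup>2) = 0" unfolding cinner_self by (metis of_real_eq_0_iff)
  then have "(cmod (u i))\<^sup>2 = 0" using sum_nonneg_eq_0_iff[of "{..<m}" "\<lambda>i. (cmod (u i))\<^sup>2"] \<open>i<m\<close>
    by auto
  then show "u i = 0" by simp
qed

lemma vnorm_scale: "vnorm m (\<lambda>i. c * u i) = cmod c * vnorm m u"
proof -
  have "(\<Sum>i<m. (cmod (c * u i))\<^sup>2) = (cmod c)\<^sup>2 * (\<Sum>i<m. (cmod (u i))\<^sup>2)"
    by (simp add: norm_mult power_mult_distrib sum_distrib_left)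
  then show ?thesis unfolding vnorm_def by (simp add: real_sqrt_mult)
qed

lemma cs: "cmod (cinner m u w) \<le> vnorm m u * vnorm m w"
proof -
  have "cmod (cinner m u w) \<le> (\<Sum>i<m. cmod (u i) * cmod (w i))"
    unfolding cinner_def by (rule order_trans[OF norm_sum]) (simp add: norm_mult)
  also have "\<dots> = sqrt ((\<Sum>i<m. cmod (u i) * cmod (w i))\<^sup>2)"
    by (simp add: sum_nonneg)
  also have "\<dots> \<le> sqrt ((\<Sum>i<m. (cmod (u i))\<^sup>2) * (\<Sum>i<m. (cmod (w i))\<^sup>2))"
    by (rule real_sqrt_le_mono, rule Cauchy_Schwarz_ineq_sum)
  also have "\<dots> = vnorm m u * vnorm m w" unfolding vnorm_def by (simp add: real_sqrt_mult)
  finally show ?thesis .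
qed

lemma sumsq_le: "finite A \<Longrightarrow> (\<forall>i\<in>A. f i \<ge> (0::real)) \<Longrightarrow> (\<Sum>i\<in>A. (f i)\<^sup>2) \<le> (\<Sum>i\<in>A. f i)\<^sup>2"
proof (induction A rule: finite_induct)
  case (insert x F)
  then have "0 \<le> sum f F" by (simp add: sum_nonneg)
  moreover have "0 \<le> f x" using insert by auto
  ultimately have "0 \<le> f x * (sum f F * 2)" by simp
  with insert show ?case by (simp add: power2_eq_square algebra_simps)
qed simp

lemma l1_bound:
  fixes z :: "nat \<Rightarrow> complex"
  assumes "\<forall>j<m. cmod (z j) = 1"
  shows "(\<Sum>i\<le>N. cmod (coeff (\<Prod>j<m. [:- z j, 1:]) i)) \<le> 2^m"
  using assms
proof (induction m arbitrary: N)
  case 0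
  then show ?case by (simp add: of_bool_def if_distrib[of cmod] cong: if_cong)
next
  case (Suc m)
  define Q where "Q = (\<Prod>j<m. [:- z j, 1:])"
  have IH: "\<And>N. (\<Sum>i\<le>N. cmod (coeff Q i)) \<le> 2^m" using Suc unfolding Q_def by auto
  have a: "cmod (z m) = 1" using Suc.prems by auto
  have eq: "(\<Prod>j<Suc m. [:- z j, 1:]) = smult (- z m) Q + pCons 0 Q"
    unfolding Q_def by (simp add: mult.commute)
  have sh: "(\<Sum>i\<le>N. cmod (coeff (pCons 0 Q) i)) \<le> 2^m"
  proof (cases N)
    case 0 then show ?thesis by simp
  next
    case (Suc n)
    then show ?thesis using IH[of n] unfolding Suc sum.atMost_Suc_shift by simp
  qed
  have "(\<Sum>i\<le>N. cmod (coeff (smult (- z m) Q + pCons 0 Q) i))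
      \<le> (\<Sum>i\<le>N. cmod (coeff Q i) + cmod (coeff (pCons 0 Q) i))"
    proof (rule sum_mono)
    fix i
    have "cmod (coeff (pCons 0 Q) i - z m * coeff Q i) \<le> cmod (coeff (pCons 0 Q) i) + cmod (z m * coeff Q i)"
      by (rule norm_triangle_ineq4)
    then show "cmod (coeff (smult (- z m) Q + pCons 0 Q) i) \<le> cmod (coeff Q i) + cmod (coeff (pCons 0 Q) i)"
      by (simp add: norm_mult a)
  qed
  also have "\<dots> \<le> 2^m + 2^m" using IH[of N] sh by (simp add: sum.distrib)
  finally show ?case unfolding eq by simp
qed


lemma P_facts:
  fixes z :: "nat \<Rightarrow> complex"
  shows "degree (\<Prod>j<k. [:- z j, 1:]) = k" and "coeff (\<Prod>j<k. [:- z j, 1:]) k = 1"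
proof -
  show d: "degree (\<Prod>j<k. [:- z j, 1:]) = k"
    by (subst degree_prod_eq_sum_degree) auto
  have "lead_coeff (\<Prod>j<k. [:- z j, 1:]) = 1" by (simp add: lead_coeff_prod)
  then show "coeff (\<Prod>j<k. [:- z j, 1:]) k = 1" using d by simp
qed

lemma P_root:
  fixes z :: "nat \<Rightarrow> complex"
  assumes "j < k"
  shows "(\<Sum>i\<le>k. coeff (\<Prod>j<k. [:- z j, 1:]) i * z j ^ i) = 0"
proof -
  have "poly (\<Prod>j<k. [:- z j, 1:]) (z j) = 0" using assms by (auto simp: poly_prod)
  then show ?thesis unfolding poly_altdef P_facts(1) .
qed

lemma interp:
  fixes z :: "nat \<Rightarrow> complex"
  assumes inj: "inj_on z {..<k}"
    and y: "(\<Sum>i\<le>k. coeff (\<Prod>j<k. [:- z j, 1:]) i * y i) = 0"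
  shows "\<exists>a\<in>cvecs k. \<forall>m\<le>k. (\<Sum>j<k. z j ^ m * a j) = y m"
proof -
  define P where "P = (\<Prod>j<k. [:- z j, 1:])"
  define Q where "Q j = (\<Prod>l\<in>{..<k}-{j}. [:- z l, 1:])" for j
  define L where "L j = smult (1 / poly (Q j) (z j)) (Q j)" for j
  have polyQ: "poly (Q j) (z m) = 0 \<longleftrightarrow> m \<noteq> j" if "j<k" "m<k" for j m
  proof -
    have "poly (Q j) (z m) = (\<Prod>l\<in>{..<k}-{j}. z m - z l)" unfolding Q_def by (simp add: poly_prod)
    also have "\<dots> = 0 \<longleftrightarrow> (\<exists>l\<in>{..<k}-{j}. z m = z l)" by simp
    also have "\<dots> \<longleftrightarrow> m \<noteq> j" using inj that unfolding inj_on_def by auto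
    finally show ?thesis .
  qed
  have polyL: "poly (L j) (z m) = (if m = j then 1 else 0)" if "j<k" "m<k" for j m
    using polyQ[OF that] polyQ[OF that(1) that(1)] unfolding L_def by auto
  have degL: "degree (L j) \<le> k - 1" if "j<k" for j
  proof -
    have "degree (Q j) \<le> sum (degree \<circ> (\<lambda>l. [:- z l, 1:])) ({..<k}-{j})"
      unfolding Q_def by (rule degree_prod_sum_le) simp
    also have "\<dots> = k - 1" using that by simp
    finally show ?thesis unfolding L_def using degree_smult_le order_trans by blast
  qed
  have ident: "(\<Sum>j<k. smult (z j ^ m) (L j)) = monom 1 m" if "m<k" for m
  proof (rule poly_eqI_degree[where A="z ` {..<k}"])
    fix x assume "x \<in> z ` {..<k}"
    then obtain l where l: "l<k" "x = z l" by auto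
    have "poly (\<Sum>j<k. smult (z j ^ m) (L j)) x = (\<Sum>j<k. z j ^ m * poly (L j) (z l))"
      using l by (simp add: poly_sum)
    also have "\<dots> = (\<Sum>j<k. if j = l then z j ^ m else 0)"
      by (rule sum.cong) (use l polyL in auto)
    also have "\<dots> = x ^ m" using l by simp
    finally show "poly (\<Sum>j<k. smult (z j ^ m) (L j)) x = poly (monom 1 m) x"
      by (simp add: poly_monom)
  next
    have c: "card (z ` {..<k}) = k" using inj by (simp add: card_image)
    have "degree (\<Sum>j<k. smult (z j ^ m) (L j)) \<le> k - 1"
      proof (rule degree_sum_le)
      fix j assume "j \<in> {..<k}"
      then show "degree (smult (z j ^ m) (L j)) \<le> k - 1"
        using degL[of j] degree_smult_le[of "z j ^ m" "L j"] by simp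
    qed simp
    then show "degree (\<Sum>j<k. smult (z j ^ m) (L j)) < card (z ` {..<k})" using c that by linarith
    show "degree (monom (1::complex) m) < card (z ` {..<k})" using c that by (simp add: degree_monom_eq)
  qed
  have cident: "(\<Sum>j<k. z j ^ m * coeff (L j) i) = (if i = m then 1 else 0)" if "m<k" for m i
  proof -
    have "coeff (\<Sum>j<k. smult (z j ^ m) (L j)) i = coeff (monom 1 m) i" using ident[OF that] by simp
    then show ?thesis by (simp add: coeff_sum coeff_monom)
  qed
  define a where "a j = (if j<k then \<Sum>i<k. coeff (L j) i * y i else 0)" for j
  have acv: "a \<in> cvecs k" unfolding cvecs_def a_def by auto
  have low: "(\<Sum>j<k. z j ^ m * a j) = y m" if "m<k" for m
  proof -
    have "(\<Sum>j<k. z j ^ m * a j) = (\<Sum>j<k. \<Sum>i<k. y i * (z j ^ m * coeff (L j) i))"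
      unfolding a_def by (simp add: sum_distrib_left mult_ac)
    also have "\<dots> = (\<Sum>i<k. y i * (\<Sum>j<k. z j ^ m * coeff (L j) i))"
      by (subst sum.swap) (simp add: sum_distrib_left)
    also have "\<dots> = (\<Sum>i<k. if i = m then y i else 0)"
      by (rule sum.cong) (auto simp: cident that)
    also have "\<dots> = y m" using that by simp
    finally show ?thesis .
  qed
  have Pk: "coeff P k = 1" unfolding P_def by (rule P_facts(2))
  have zk: "z j ^ k = - (\<Sum>i<k. coeff P i * z j ^ i)" if "j<k" for j
  proof -
    have "(\<Sum>i\<le>k. coeff P i * z j ^ i) = 0" unfolding P_def using P_root[OF that] .
    then show ?thesis using Pk by (simp add: lessThan_Suc_atMost[symmetric] eq_neg_iff_add_eq_0 add.commute)
  qed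
  have high: "(\<Sum>j<k. z j ^ k * a j) = y k"
  proof -
    have "(\<Sum>j<k. z j ^ k * a j) = (\<Sum>j<k. - (\<Sum>i<k. coeff P i * z j ^ i) * a j)"
      by (rule sum.cong) (auto simp: zk)
    also have "\<dots> = - (\<Sum>j<k. \<Sum>i<k. coeff P i * (z j ^ i * a j))"
      by (simp add: sum_distrib_left sum_distrib_right sum_negf mult_ac)
    also have "\<dots> = - (\<Sum>i<k. \<Sum>j<k. coeff P i * (z j ^ i * a j))"
      by (subst sum.swap) simp
    also have "\<dots> = - (\<Sum>i<k. coeff P i * (\<Sum>j<k. z j ^ i * a j))"
      by (simp add: sum_distrib_left)
    also have "\<dots> = - (\<Sum>i<k. coeff P i * y i)" by (simp add: low)
    also have "\<dots> = y k"
    proof -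
      have "(\<Sum>i<k. coeff P i * y i) + y k = 0" using y Pk unfolding P_def[symmetric]
        by (simp add: lessThan_Suc_atMost[symmetric] add.commute)
      then show ?thesis by (rule add.inverse_unique)
    qed
    finally show ?thesis .
  qed
  show ?thesis using acv low high by (metis le_neq_implies_less)
qed


lemma cinner_Suc: "cinner (k+1) u w = (\<Sum>i\<le>k. cnj (u i) * w i)"
  unfolding cinner_def by (simp add: lessThan_Suc_atMost)

lemma vnorm_Suc: "vnorm (k+1) u = sqrt (\<Sum>i\<le>k. (cmod (u i))\<^sup>2)"
  unfolding vnorm_def by (simp add: lessThan_Suc_atMost)

theorem theorem3p1:
  fixes k :: nat and th :: "nat \<Rightarrow> real" and v :: "nat \<Rightarrow> complex" and \<theta> :: real
  assumes "k \<ge> 1"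
    and "inj_on (\<lambda>j. exp (\<i> * complex_of_real (th j))) {..<k}"
    and "v \<in> orth_compl (k+1) (colspace k th)"
    and "vnorm (k+1) v = 1"
  shows "(\<exists>a\<in>cvecs k. vnorm (k+1) (\<lambda>i. Ahat_mult k th a i - phi k (exp (\<i> * \<theta>)) i)
            = vnorm (k+1) (orth_proj (k+1) (orth_compl (k+1) (colspace k th)) (phi k (exp (\<i> * \<theta>)))))
       \<and> (\<forall>a\<in>cvecs k. vnorm (k+1) (orth_proj (k+1) (orth_compl (k+1) (colspace k th)) (phi k (exp (\<i> * \<theta>))))
            \<le> vnorm (k+1) (\<lambda>i. Ahat_mult k th a i - phi k (exp (\<i> * \<theta>)) i))
       \<and> vnorm (k+1) (orth_proj (k+1) (orth_compl (k+1) (colspace k th)) (phi k (exp (\<i> * \<theta>))))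
            = cmod (cinner (k+1) v (phi k (exp (\<i> * \<theta>))))
       \<and> cmod (cinner (k+1) v (phi k (exp (\<i> * \<theta>))))
            \<ge> (1 / 2 ^ k) * (\<Prod>j<k. cmod (exp (\<i> * \<theta>) - exp (\<i> * complex_of_real (th j))))"
proof -
  define z where "z j = exp (\<i> * complex_of_real (th j))" for j
  define w where "w = exp (\<i> * complex_of_real \<theta>)"
  define x where "x = phi k w"
  define W where "W = orth_compl (k+1) (colspace k th)"
  define P where "P = (\<Prod>j<k. [:- z j, 1:])"
  define pt where "pt i = (if i \<le> k then cnj (coeff P i) else 0)" for i
  define S where "S = (\<Sum>i\<le>k. (cmod (coeff P i))\<^sup>2)"
  have Ah: "Ahat_mult k th a m = (if m \<le> k then (\<Sum>j<k. z j ^ m * a j) else 0)" for a m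
    unfolding Ahat_mult_def phi_def z_def by auto
  have memW: "u \<in> W \<longleftrightarrow> u \<in> cvecs (k+1) \<and> (\<forall>a\<in>cvecs k. cinner (k+1) (Ahat_mult k th a) u = 0)" for u
    unfolding W_def orth_compl_def colspace_def by auto
  have vW: "v \<in> W" using assms(3) unfolding W_def .
  then have vcv: "v \<in> cvecs (k+1)" and vorth: "\<And>a. a \<in> cvecs k \<Longrightarrow> cinner (k+1) (Ahat_mult k th a) v = 0"
    using memW by auto
  have injz: "inj_on z {..<k}" using assms(2) unfolding z_def .
  have A2: "\<exists>a\<in>cvecs k. \<forall>m\<le>k. Ahat_mult k th a m = y m" if hy: "(\<Sum>i\<le>k. coeff P i * y i) = 0" for y
  proof -
    obtain a where "a \<in> cvecs k" "\<forall>m\<le>k. (\<Sum>j<k. z j ^ m * a j) = y m"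
      using interp[OF injz, of y] hy unfolding P_def by blast
    then show ?thesis using Ah by auto
  qed
  have degP: "degree P = k" unfolding P_def by (rule P_facts(1))
  have Pk: "coeff P k = 1" unfolding P_def by (rule P_facts(2))
  have cinner_pt: "cinner (k+1) pt u = (\<Sum>i\<le>k. coeff P i * u i)" for u
    unfolding cinner_Suc pt_def by (rule sum.cong) auto
  have A3: "cinner (k+1) (Ahat_mult k th a) pt = 0" for a
  proof -
    have "cinner (k+1) (Ahat_mult k th a) pt = cnj (\<Sum>i\<le>k. (\<Sum>j<k. z j ^ i * a j) * coeff P i)"
      unfolding cinner_Suc cnj_sum by (rule sum.cong) (auto simp: Ah pt_def)
    also have "(\<Sum>i\<le>k. (\<Sum>j<k. z j ^ i * a j) * coeff P i) = (\<Sum>i\<le>k. \<Sum>j<k. a j * (coeff P i * z j ^ i))"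
      by (simp add: sum_distrib_right sum_distrib_left mult_ac)
    also have "\<dots> = (\<Sum>j<k. \<Sum>i\<le>k. a j * (coeff P i * z j ^ i))"
      by (rule sum.swap)
    also have "\<dots> = (\<Sum>j<k. a j * (\<Sum>i\<le>k. coeff P i * z j ^ i))"
      by (simp add: sum_distrib_left)
    also have "\<dots> = 0" using P_root[of _ k z] unfolding P_def by simp
    finally show ?thesis by simp
  qed
  have S1: "1 \<le> S" unfolding S_def
    using member_le_sum[of k "{..k}" "\<lambda>i. (cmod (coeff P i))\<^sup>2"] Pk by simp
  then have S0: "S \<noteq> 0" by simp
  have ptpt: "cinner (k+1) pt pt = of_real S"
    unfolding cinner_pt S_def of_real_sum by (rule sum.cong) (auto simp: pt_def complex_norm_square[symmetric])
  have vnpt: "vnorm (k+1) pt = sqrt S"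
    unfolding vnorm_Suc S_def by (rule arg_cong[where f=sqrt], rule sum.cong) (auto simp: pt_def)
  have Sb: "sqrt S \<le> 2^k"
  proof -
    have "S \<le> (\<Sum>i\<le>k. cmod (coeff P i))\<^sup>2" unfolding S_def by (rule sumsq_le) auto
    also have "\<dots> \<le> (2^k)\<^sup>2"
      using l1_bound[of k z k] by (intro power_mono) (auto simp: P_def z_def sum_nonneg)
    finally have "sqrt S \<le> sqrt ((2^k)\<^sup>2)" by (rule real_sqrt_le_mono)
    then show ?thesis by simp
  qed
  define \<beta> where "\<beta> = cinner (k+1) pt v / of_real S"
  define yv where "yv i = v i - \<beta> * pt i" for i
  have "(\<Sum>i\<le>k. coeff P i * yv i) = 0"
    unfolding cinner_pt[symmetric] yv_def cinner_diff2 cinner_scale2 ptpt \<beta>_def using S0 by simp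
  then obtain a0 where a0: "a0 \<in> cvecs k" "\<forall>m\<le>k. Ahat_mult k th a0 m = yv m" using A2 by blast
  have "cinner (k+1) yv yv = cinner (k+1) (Ahat_mult k th a0) yv"
    by (rule cinner_cong) (use a0 in auto)
  also have "\<dots> = 0" unfolding yv_def cinner_diff2 cinner_scale2 A3 vorth[OF a0(1)] by simp
  finally have "\<And>i. i < k+1 \<Longrightarrow> yv i = 0" using cinner_self_zero by blast
  then have vb: "\<And>i. i \<le> k \<Longrightarrow> v i = \<beta> * pt i" unfolding yv_def by auto
  have nb: "cmod \<beta> * sqrt S = 1"
  proof -
    have "vnorm (k+1) v = vnorm (k+1) (\<lambda>i. \<beta> * pt i)" by (rule vnorm_cong) (auto simp: vb)
    then show ?thesis using assms(4) vnorm_scale vnpt by simp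
  qed
  have bb: "cnj \<beta> * \<beta> * of_real S = 1"
  proof -
    have "cnj \<beta> * \<beta> = of_real ((cmod \<beta>)\<^sup>2)" by (simp only: complex_norm_square mult.commute)
    moreover have "(cmod \<beta>)\<^sup>2 * S = 1" using nb S1
      by (metis power2_eq_square power_mult_distrib real_sqrt_pow2 less_le_trans zero_less_one less_imp_le mult_1)
    ultimately show ?thesis by (metis of_real_1 of_real_mult)
  qed
  define \<gamma> where "\<gamma> = cinner (k+1) v x"
  have cptx: "cinner (k+1) pt x = poly P w"
    unfolding cinner_pt poly_altdef degP x_def by (rule sum.cong) (auto simp: phi_def mult.commute)
  have g: "\<gamma> = cnj \<beta> * poly P w"
  proof -
    have "\<gamma> = cnj (cinner (k+1) x v)" unfolding \<gamma>_def by (rule cinner_cnj)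
    also have "cinner (k+1) x v = cinner (k+1) x (\<lambda>i. \<beta> * pt i)" by (rule cinner_cong) (auto simp: vb)
    also have "\<dots> = \<beta> * cnj (cinner (k+1) pt x)" unfolding cinner_scale2 by (simp add: cinner_cnj[of _ x])
    finally show ?thesis using cptx by simp
  qed
  have nP: "cmod (poly P w) = (\<Prod>j<k. cmod (w - z j))"
    unfolding P_def poly_prod by (simp add: prod_norm)
  have part4: "cmod \<gamma> \<ge> (1 / 2^k) * (\<Prod>j<k. cmod (w - z j))"
  proof -
    have "cmod \<gamma> = (\<Prod>j<k. cmod (w - z j)) / sqrt S" using g nP nb S1
      by (simp add: norm_mult field_simps)
    moreover have "(\<Prod>j<k. cmod (w - z j)) / 2^k \<le> (\<Prod>j<k. cmod (w - z j)) / sqrt S"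
      using Sb S1 by (intro divide_left_mono) (auto simp: prod_nonneg)
    ultimately show ?thesis by simp
  qed
  define yx where "yx i = x i - \<gamma> * v i" for i
  have cptv: "cinner (k+1) pt v = \<beta> * of_real S" unfolding \<beta>_def using S0 by simp
  have "(\<Sum>i\<le>k. coeff P i * yx i) = 0"
    unfolding cinner_pt[symmetric] yx_def cinner_diff2 cinner_scale2 cptv cptx g
    using bb by (simp add: algebra_simps)
  then obtain a1 where a1: "a1 \<in> cvecs k" "\<forall>m\<le>k. Ahat_mult k th a1 m = yx m" using A2 by blast
  define Pr where "Pr i = \<gamma> * v i" for i
  have PrW: "Pr \<in> W" unfolding memW
  proof
    show "Pr \<in> cvecs (k+1)" using vcv unfolding cvecs_def Pr_def by auto
    show "\<forall>a\<in>cvecs k. cinner (k + 1) (Ahat_mult k th a) Pr = 0"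
      unfolding Pr_def cinner_scale2 using vorth by simp
  qed
  have Pr_orth: "cinner (k+1) u (\<lambda>i. x i - Pr i) = 0" if "u \<in> W" for u
  proof -
    have "cinner (k+1) u (\<lambda>i. x i - Pr i) = cinner (k+1) u (Ahat_mult k th a1)"
      by (rule cinner_cong) (use a1 in \<open>auto simp: yx_def Pr_def\<close>)
    also have "\<dots> = cnj (cinner (k+1) (Ahat_mult k th a1) u)" by (rule cinner_cnj)
    also have "\<dots> = 0" using that a1(1) memW by simp
    finally show ?thesis .
  qed
  have proj: "orth_proj (k+1) W x = Pr"
    unfolding orth_proj_def
  proof (rule the_equality)
    show "Pr \<in> W \<and> (\<forall>u\<in>W. cinner (k + 1) u (\<lambda>i. x i - Pr i) = 0)" using PrW Pr_orth by blast
  next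
    fix p assume p: "p \<in> W \<and> (\<forall>u\<in>W. cinner (k + 1) u (\<lambda>i. x i - p i) = 0)"
    define d where "d i = p i - Pr i" for i
    have dW: "d \<in> W" unfolding memW
    proof
      show "d \<in> cvecs (k+1)" using p PrW memW unfolding d_def cvecs_def by auto
      show "\<forall>a\<in>cvecs k. cinner (k + 1) (Ahat_mult k th a) d = 0"
        using p PrW memW unfolding d_def cinner_diff2 by auto
    qed
    have "cinner (k+1) d d = cinner (k+1) d (\<lambda>i. x i - Pr i) - cinner (k+1) d (\<lambda>i. x i - p i)"
      unfolding cinner_diff2[symmetric] d_def by (simp add: algebra_simps)
    also have "\<dots> = 0" using Pr_orth[OF dW] p dW by simp
    finally have "\<And>i. i < k+1 \<Longrightarrow> d i = 0" using cinner_self_zero by blast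
    moreover have "\<And>i. i \<ge> k+1 \<Longrightarrow> d i = 0" using dW memW unfolding cvecs_def by auto
    ultimately have "\<And>i. d i = 0" by (meson not_le)
    then show "p = Pr" unfolding d_def by auto
  qed
  have nPr: "vnorm (k+1) Pr = cmod \<gamma>" unfolding Pr_def vnorm_scale assms(4) by simp
  have part1: "vnorm (k+1) (\<lambda>i. Ahat_mult k th a1 i - x i) = vnorm (k+1) Pr"
  proof -
    have "vnorm (k+1) (\<lambda>i. Ahat_mult k th a1 i - x i) = vnorm (k+1) (\<lambda>i. (- \<gamma>) * v i)"
      by (rule vnorm_cong) (use a1 in \<open>auto simp: yx_def\<close>)
    also have "\<dots> = cmod (- \<gamma>) * vnorm (k+1) v" by (rule vnorm_scale)
    finally show ?thesis using nPr assms(4) by simp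
  qed
  have part2: "vnorm (k+1) Pr \<le> vnorm (k+1) (\<lambda>i. Ahat_mult k th a i - x i)" if "a \<in> cvecs k" for a
  proof -
    have "cinner (k+1) v (\<lambda>i. Ahat_mult k th a i - x i) = - \<gamma>"
      unfolding cinner_diff2 \<gamma>_def using cinner_cnj[of "k+1" v] vorth[OF that] by simp
    then have "cmod \<gamma> \<le> vnorm (k+1) v * vnorm (k+1) (\<lambda>i. Ahat_mult k th a i - x i)"
      using cs[of "k+1" v] by (metis norm_minus_cancel)
    then show ?thesis using nPr assms(4) by simp
  qed
  show ?thesis
    using part1 part2 part4 a1(1) nPr proj
    unfolding W_def[symmetric] x_def[symmetric] w_def[symmetric] z_def[symmetric] \<gamma>_def[symmetric]
    by auto
qed

end
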